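(* Let $h>0$. Apart from equilibrium points, the flow $(\dagger)$ restricted to the infinity manifold $N_h$ has no closed orbits and no recurrent orbits.
   Context: Let $\Theta(s)=1-s^2$, and let $\lambda\in(0,\pi/4)$ be a constant depending only on the masses. The infinity manifold is $N_h=\{(\tilde v,\tilde s,\tilde u)\in\mathbb R\times[-1,1]\times\mathbb R:\tfrac12(\tilde u^2+\tilde v^2)=h\}$. It is the invariant subset $\{\tilde R=0\}$ of the positive-energy regularized flow $(\dagger)$ of the collinear three-body problem with Hamiltonian $$\tfrac12\mathbf p^TM^{-1}\mathbf p-\sum_{i<j}\alpha_{ij}|q_i-q_j|^{-a}+\sum_{i<j}\beta_{ij}|q_i-q_j|^{-b},$$ where $m_i,\alpha_{ij},\beta_{ij}>0$ and $4<a<b-1$. On $N_h$ the flow is $$\tilde v'=\Theta(\tilde s)\tilde u^2,\qquad \tilde s'=\tfrac1\lambda\Theta(\tilde s)\tilde u,\qquad \tilde u'=-\Theta(\tilde s)\tilde u\tilde v.$$ *)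

theory Defs
  imports "HOL-Analysis.Analysis"
begin

definition Theta :: "real \<Rightarrow> real" where
  "Theta s = 1 - s^2"

text \<open>Vector field of the flow restricted to the infinity manifold (R = 0).\<close>
definition inf_field :: "real \<Rightarrow> real \<times> real \<times> real \<Rightarrow> real \<times> real \<times> real" where
  "inf_field lam p = (case p of (v, s, u) \<Rightarrow>
      (Theta s * u^2, (1 / lam) * Theta s * u, - Theta s * u * v))"

definition N_h :: "real \<Rightarrow> (real \<times> real \<times> real) set" where
  "N_h h = {(v, s, u). -1 \<le> s \<and> s \<le> 1 \<and> (u^2 + v^2) / 2 = h}"

definition is_orbit :: "real \<Rightarrow> real \<Rightarrow> (real \<Rightarrow> real \<times> real \<times> real) \<Rightarrow> bool" where
  "is_orbit lam h x \<longleftrightarrow>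
     (\<forall>t. x t \<in> N_h h) \<and> (\<forall>t. (x has_vector_derivative inf_field lam (x t)) (at t))"

definition equilibrium :: "real \<Rightarrow> real \<times> real \<times> real \<Rightarrow> bool" where
  "equilibrium lam p \<longleftrightarrow> inf_field lam p = 0"

definition closed_orbit :: "real \<Rightarrow> (real \<Rightarrow> real \<times> real \<times> real) \<Rightarrow> bool" where
  "closed_orbit lam x \<longleftrightarrow>
     (\<exists>T>0. \<forall>t. x (t + T) = x t) \<and> \<not> equilibrium lam (x 0)"

text \<open>Recurrent orbit: the initial point lies in its own omega-limit set
  or in its own alpha-limit set.\<close>
definition recurrent :: "(real \<Rightarrow> real \<times> real \<times> real) \<Rightarrow> bool" where
  "recurrent x \<longleftrightarrow>
     (\<exists>tn :: nat \<Rightarrow> real. filterlim tn at_top sequentially \<and> (\<lambda>n. x (tn n)) \<longlonglongrightarrow> x 0) \<or>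
     (\<exists>tn :: nat \<Rightarrow> real. filterlim tn at_bot sequentially \<and> (\<lambda>n. x (tn n)) \<longlonglongrightarrow> x 0)"

end

theory Submission
  imports Defs
begin

lemma orbit_vderiv:
  assumes "is_orbit lam h x"
  shows "((\<lambda>t. fst (x t)) has_real_derivative
          Theta (fst (snd (x t))) * (snd (snd (x t)))^2) (at t)"
proof -
  have d: "(x has_vector_derivative inf_field lam (x t)) (at t)"
    using assms unfolding is_orbit_def by blast
  have "((\<lambda>t. fst (x t)) has_vector_derivative fst (inf_field lam (x t))) (at t)"
    using has_derivative_fst[OF d[unfolded has_vector_derivative_def]]
    unfolding has_vector_derivative_def by simp
  moreover have "fst (inf_field lam (x t)) = Theta (fst (snd (x t))) * (snd (snd (x t)))^2"
    by (simp add: inf_field_def split: prod.splits)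
  ultimately show ?thesis by (simp add: has_real_derivative_iff_has_vector_derivative)
qed

lemma orbit_nonneg:
  assumes "is_orbit lam h x"
  shows "Theta (fst (snd (x t))) * (snd (snd (x t)))^2 \<ge> 0"
proof -
  have "x t \<in> N_h h" using assms unfolding is_orbit_def by blast
  then have "-1 \<le> fst (snd (x t)) \<and> fst (snd (x t)) \<le> 1"
    unfolding N_h_def by (auto split: prod.splits)
  then have "Theta (fst (snd (x t))) \<ge> 0" unfolding Theta_def
    by (metis abs_le_iff abs_square_le_1 diff_ge_0_iff_ge minus_le_iff)
  then show ?thesis by simp
qed

lemma orbit_mono:
  assumes "is_orbit lam h x" "a \<le> b"
  shows "fst (x a) \<le> fst (x b)"
  using DERIV_nonneg_imp_nondecreasing[of a b "\<lambda>t. fst (x t)"] assms orbit_vderiv orbit_nonneg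
  by blast

lemma orbit_eq:
  assumes "is_orbit lam h x" "\<not> equilibrium lam (x 0)"
  shows "\<exists>e>0. fst (x 0) < fst (x e) \<and> fst (x (-e)) < fst (x 0)"
proof -
  obtain v s u where x0: "x 0 = (v, s, u)" by (cases "x 0") auto
  have pos: "Theta s * u^2 > 0"
  proof -
    have "Theta s * u^2 \<ge> 0" using orbit_nonneg[OF assms(1), of 0] x0 by simp
    moreover have "Theta s * u^2 \<noteq> 0"
      using assms(2) x0 unfolding equilibrium_def inf_field_def by (auto simp: zero_prod_def)
    ultimately show ?thesis by linarith
  qed
  have D: "((\<lambda>t. fst (x t)) has_real_derivative Theta s * u^2) (at 0)"
    using orbit_vderiv[OF assms(1), of 0] x0 by simp
  obtain d1 where d1: "d1 > 0" "\<And>h. h > 0 \<Longrightarrow> h < d1 \<Longrightarrow> fst (x 0) < fst (x (0 + h))"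
    using DERIV_pos_inc_right[OF D pos] by blast
  obtain d2 where d2: "d2 > 0" "\<And>h. h > 0 \<Longrightarrow> h < d2 \<Longrightarrow> fst (x (0 - h)) < fst (x 0)"
    using DERIV_pos_inc_left[OF D pos] by blast
  define e where "e = min d1 d2 / 2"
  have "e > 0" "e < d1" "e < d2" using d1 d2 by (auto simp: e_def)
  then show ?thesis using d1(2)[of e] d2(2)[of e] by (intro exI[of _ e]) auto
qed

theorem mainTheorem7:
  fixes lam h :: real
  assumes "0 < lam" and "lam < pi / 4" and "0 < h"
  shows "\<forall>x. is_orbit lam h x \<longrightarrow>
           \<not> closed_orbit lam x \<and> (recurrent x \<longrightarrow> equilibrium lam (x 0))"
proof (intro allI impI conjI)
  fix x assume o: "is_orbit lam h x"
  show "\<not> closed_orbit lam x"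
  proof
    assume "closed_orbit lam x"
    then obtain T where T: "T > 0" "\<And>t. x (t + T) = x t" and ne: "\<not> equilibrium lam (x 0)"
      unfolding closed_orbit_def by blast
    obtain e where e: "e > 0" "fst (x 0) < fst (x e)" "fst (x (-e)) < fst (x 0)"
      using orbit_eq[OF o ne] by blast
    have per: "\<And>n::nat. x (real n * T) = x 0"
    proof -
      fix n :: nat show "x (real n * T) = x 0"
        by (induction n) (auto simp: distrib_right T(2)[of "real n * T" for n, simplified add.commute] add.commute)
    qed
    obtain n :: nat where n: "e \<le> real n * T"
      using reals_Archimedean3[OF T(1)] by (meson less_le_not_le nle_le)
    have "fst (x e) \<le> fst (x (real n * T))" using orbit_mono[OF o n] .
    then show False using per[of n] e by simp
  qed
next
  fix x assume o: "is_orbit lam h x" and r: "recurrent x"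
  show "equilibrium lam (x 0)"
  proof (rule ccontr)
    assume ne: "\<not> equilibrium lam (x 0)"
    obtain e where e: "e > 0" "fst (x 0) < fst (x e)" "fst (x (-e)) < fst (x 0)"
      using orbit_eq[OF o ne] by blast
    have cf: "\<And>tn. (\<lambda>n. x (tn n)) \<longlonglongrightarrow> x 0 \<Longrightarrow> (\<lambda>n. fst (x (tn n))) \<longlonglongrightarrow> fst (x 0)"
      by (rule tendsto_fst)
    from r show False unfolding recurrent_def
    proof (elim disjE exE conjE)
      fix tn :: "nat \<Rightarrow> real"
      assume f: "filterlim tn at_top sequentially" and l: "(\<lambda>n. x (tn n)) \<longlonglongrightarrow> x 0"
      have ev: "eventually (\<lambda>n. fst (x e) \<le> fst (x (tn n))) sequentially"
        using filterlim_at_top[THEN iffD1, OF f, rule_format, of e]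
        by (auto elim: eventually_mono intro: orbit_mono[OF o])
      have "fst (x e) \<le> fst (x 0)"
        using tendsto_lowerbound[OF cf[OF l] ev] by simp
      then show False using e by simp
    next
      fix tn :: "nat \<Rightarrow> real"
      assume f: "filterlim tn at_bot sequentially" and l: "(\<lambda>n. x (tn n)) \<longlonglongrightarrow> x 0"
      have ev: "eventually (\<lambda>n. fst (x (tn n)) \<le> fst (x (-e))) sequentially"
        using filterlim_at_bot[THEN iffD1, OF f, rule_format, of "-e"]
        by (auto elim: eventually_mono intro: orbit_mono[OF o])
      have "fst (x 0) \<le> fst (x (-e))"
        using tendsto_upperbound[OF cf[OF l] ev] by simp
      then show False using e by simp
    qed
  qed
qed

end
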